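(* Let $m\geq 3$ and let $R(m,3)$ be the rectangular supergrid graph induced by $\{(x,y):1\leq x\leq m,\ 1\leq y\leq 3\}$. Let $z_1=(m,1)$, $z_2=(m,2)$, $z_3=(m,3)$, $e_{12}=(z_1,z_2)$ and $e_{23}=(z_2,z_3)$. If $s$ and $t$ are two distinct vertices of $R(m,3)$ with $\{s,t\}\cap\{z_1,z_2,z_3\}=\emptyset$, then there exists a Hamiltonian path of $R(m,3)$ from $s$ to $t$ that contains both edges $e_{12}$ and $e_{23}$.
   Context: The supergrid graph $S^\infty$ has vertex set $\mathbb{Z}^2$, two distinct vertices $u,v$ being adjacent iff $|u_x-v_x|\leq 1$ and $|u_y-v_y|\leq 1$; a supergrid graph is a finite vertex-induced subgraph of $S^\infty$. A Hamiltonian path from $s$ to $t$ is a simple path from $s$ to $t$ visiting every vertex exactly once. *)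

theory Defs
  imports Main
begin

type_synonym vertex = "int \<times> int"

definition sg_adj :: "vertex \<Rightarrow> vertex \<Rightarrow> bool" where
  "sg_adj u v \<longleftrightarrow> u \<noteq> v \<and> \<bar>fst u - fst v\<bar> \<le> 1 \<and> \<bar>snd u - snd v\<bar> \<le> 1"

definition rect :: "int \<Rightarrow> int \<Rightarrow> vertex set" where
  "rect m n = {(x, y). 1 \<le> x \<and> x \<le> m \<and> 1 \<le> y \<and> y \<le> n}"

definition ham_path :: "vertex set \<Rightarrow> vertex \<Rightarrow> vertex \<Rightarrow> vertex list \<Rightarrow> bool" where
  "ham_path V s t P \<longleftrightarrow> P \<noteq> [] \<and> distinct P \<and> set P = V \<and> hd P = s \<and> last P = t \<and>
     (\<forall>i. Suc i < length P \<longrightarrow> sg_adj (P ! i) (P ! Suc i))"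

definition path_has_edge :: "vertex list \<Rightarrow> vertex \<Rightarrow> vertex \<Rightarrow> bool" where
  "path_has_edge P u v \<longleftrightarrow>
     (\<exists>i. Suc i < length P \<and> ((P ! i = u \<and> P ! Suc i = v) \<or> (P ! i = v \<and> P ! Suc i = u)))"

end

theory Submission
  imports Defs
begin

fun pairs :: "'a list \<Rightarrow> ('a \<times> 'a) list" where
  "pairs (x # y # zs) = (x, y) # pairs (y # zs)"
| "pairs _ = []"

lemma pairs_zip: "pairs P = zip P (tl P)"
  by (induction P rule: pairs.induct) auto

lemma pairs_Cons: "pairs (x # xs) = (case xs of [] \<Rightarrow> [] | y # _ \<Rightarrow> (x, y) # pairs xs)"
  by (cases xs) auto

lemma pairs_append:
  "pairs (xs @ ys) = pairs xs @ (if xs = [] \<or> ys = [] then [] else [(last xs, hd ys)]) @ pairs ys"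
proof (induction xs)
  case Nil then show ?case by simp
next
  case (Cons x xs)
  then show ?case by (cases xs; cases ys) (auto simp: pairs_Cons split: list.splits)
qed

lemma set_pairs: "set (pairs P) = {(P ! i, P ! Suc i) | i. Suc i < length P}"
  by (auto simp: pairs_zip set_zip nth_tl)

lemma in_pairs: "(u, v) \<in> set (pairs P) \<longleftrightarrow> (\<exists>xs ys. P = xs @ u # v # ys)"
proof
  assume "(u, v) \<in> set (pairs P)"
  then show "\<exists>xs ys. P = xs @ u # v # ys"
  proof (induction P rule: pairs.induct)
    case (1 x y zs)
    show ?case
    proof (cases "(u, v) = (x, y)")
      case True then show ?thesis by auto
    next
      case False
      then have "(u, v) \<in> set (pairs (y # zs))" using 1(2) by auto
      from 1(1)[OF this] obtain xs ys where "y # zs = xs @ u # v # ys" by blast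
      then have "x # y # zs = (x # xs) @ u # v # ys" by simp
      then show ?thesis by blast
    qed
  qed auto
next
  assume "\<exists>xs ys. P = xs @ u # v # ys"
  then show "(u, v) \<in> set (pairs P)" by (auto simp: pairs_append)
qed

lemma pairs_elems: "(u, v) \<in> set (pairs P) \<Longrightarrow> u \<in> set P \<and> v \<in> set P"
  by (auto simp: in_pairs)

definition hp :: "vertex set \<Rightarrow> vertex \<Rightarrow> vertex \<Rightarrow> vertex list \<Rightarrow> bool" where
  "hp V s t P \<longleftrightarrow> P \<noteq> [] \<and> distinct P \<and> set P = V \<and> hd P = s \<and> last P = t \<and>
     (\<forall>e\<in>set (pairs P). sg_adj (fst e) (snd e))"

lemma ham_path_hp: "ham_path V s t P \<longleftrightarrow> hp V s t P"
  unfolding ham_path_def hp_def set_pairs by (auto, metis prod.collapse)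

lemma path_has_edge_pairs:
  "path_has_edge P u v \<longleftrightarrow> (u, v) \<in> set (pairs P) \<or> (v, u) \<in> set (pairs P)"
  unfolding path_has_edge_def set_pairs by auto

definition R :: "int \<Rightarrow> int \<Rightarrow> vertex set" where
  "R a b = {(x, y). a \<le> x \<and> x \<le> b \<and> 1 \<le> y \<and> y \<le> 3}"

definition vE :: "vertex list \<Rightarrow> int \<Rightarrow> bool" where
  "vE P c \<longleftrightarrow> (\<exists>y y'. ((c, y), (c, y')) \<in> set (pairs P))"

definition good :: "int \<Rightarrow> int \<Rightarrow> vertex \<Rightarrow> vertex \<Rightarrow> vertex list \<Rightarrow> bool" where
  "good a b s t P \<longleftrightarrow> hp (R a b) s t P \<and> vE P a \<and> vE P b"

lemma three: "1 \<le> y \<Longrightarrow> y \<le> 3 \<Longrightarrow> y = 1 \<or> y = 2 \<or> y = (3::int)"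
  by arith

lemma R2: "R a (a + 1) = {(a, 1), (a, 2), (a, 3), (a + 1, 1), (a + 1, 2), (a + 1, 3)}"
  unfolding R_def by (auto dest!: three)

lemma R3: "R a (a + 2) = {(a, 1), (a, 2), (a, 3), (a + 1, 1), (a + 1, 2), (a + 1, 3), (a + 2, 1), (a + 2, 2), (a + 2, 3)}"
  unfolding R_def by (auto dest!: three)

lemmas good_facts = good_def hp_def vE_def R2 R3 sg_adj_def

lemma w2_01_02: "\<exists>P. good a (a + 1) (a, 1) (a, 2) P"
  by (rule exI[of _ "[(a, 1), (a + 1, 1), (a + 1, 2), (a + 1, 3), (a, 3), (a, 2)]"]) (simp add: good_facts insert_commute; blast)

lemma w2_01_03: "\<exists>P. good a (a + 1) (a, 1) (a, 3) P"
  by (rule exI[of _ "[(a, 1), (a, 2), (a + 1, 1), (a + 1, 2), (a + 1, 3), (a, 3)]"]) (simp add: good_facts insert_commute; blast)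

lemma w2_01_11: "\<exists>P. good a (a + 1) (a, 1) (a + 1, 1) P"
  by (rule exI[of _ "[(a, 1), (a, 2), (a, 3), (a + 1, 3), (a + 1, 2), (a + 1, 1)]"]) (simp add: good_facts insert_commute; blast)

lemma w2_01_12: "\<exists>P. good a (a + 1) (a, 1) (a + 1, 2) P"
  by (rule exI[of _ "[(a, 1), (a + 1, 1), (a, 2), (a, 3), (a + 1, 3), (a + 1, 2)]"]) (simp add: good_facts insert_commute; blast)

lemma w2_01_13: "\<exists>P. good a (a + 1) (a, 1) (a + 1, 3) P"
  by (rule exI[of _ "[(a, 1), (a, 2), (a + 1, 1), (a + 1, 2), (a, 3), (a + 1, 3)]"]) (simp add: good_facts insert_commute; blast)

lemma w2_02_01: "\<exists>P. good a (a + 1) (a, 2) (a, 1) P"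
  by (rule exI[of _ "[(a, 2), (a, 3), (a + 1, 3), (a + 1, 2), (a + 1, 1), (a, 1)]"]) (simp add: good_facts insert_commute; blast)

lemma w2_02_03: "\<exists>P. good a (a + 1) (a, 2) (a, 3) P"
  by (rule exI[of _ "[(a, 2), (a, 1), (a + 1, 1), (a + 1, 2), (a + 1, 3), (a, 3)]"]) (simp add: good_facts insert_commute; blast)

lemma w2_02_11: "\<exists>P. good a (a + 1) (a, 2) (a + 1, 1) P"
  by (rule exI[of _ "[(a, 2), (a, 3), (a + 1, 3), (a + 1, 2), (a, 1), (a + 1, 1)]"]) (simp add: good_facts insert_commute; blast)

lemma w2_02_13: "\<exists>P. good a (a + 1) (a, 2) (a + 1, 3) P"
  by (rule exI[of _ "[(a, 2), (a, 1), (a + 1, 1), (a + 1, 2), (a, 3), (a + 1, 3)]"]) (simp add: good_facts insert_commute; blast)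

lemma w2_03_01: "\<exists>P. good a (a + 1) (a, 3) (a, 1) P"
  by (rule exI[of _ "[(a, 3), (a, 2), (a + 1, 3), (a + 1, 2), (a + 1, 1), (a, 1)]"]) (simp add: good_facts insert_commute; blast)

lemma w2_03_02: "\<exists>P. good a (a + 1) (a, 3) (a, 2) P"
  by (rule exI[of _ "[(a, 3), (a + 1, 3), (a + 1, 2), (a + 1, 1), (a, 1), (a, 2)]"]) (simp add: good_facts insert_commute; blast)

lemma w2_03_11: "\<exists>P. good a (a + 1) (a, 3) (a + 1, 1) P"
  by (rule exI[of _ "[(a, 3), (a, 2), (a + 1, 3), (a + 1, 2), (a, 1), (a + 1, 1)]"]) (simp add: good_facts insert_commute; blast)

lemma w2_03_12: "\<exists>P. good a (a + 1) (a, 3) (a + 1, 2) P"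
  by (rule exI[of _ "[(a, 3), (a + 1, 3), (a, 2), (a, 1), (a + 1, 1), (a + 1, 2)]"]) (simp add: good_facts insert_commute; blast)

lemma w2_03_13: "\<exists>P. good a (a + 1) (a, 3) (a + 1, 3) P"
  by (rule exI[of _ "[(a, 3), (a, 2), (a, 1), (a + 1, 1), (a + 1, 2), (a + 1, 3)]"]) (simp add: good_facts insert_commute; blast)

lemma w2_11_01: "\<exists>P. good a (a + 1) (a + 1, 1) (a, 1) P"
  by (rule exI[of _ "[(a + 1, 1), (a, 2), (a, 3), (a + 1, 3), (a + 1, 2), (a, 1)]"]) (simp add: good_facts insert_commute; blast)

lemma w2_11_02: "\<exists>P. good a (a + 1) (a + 1, 1) (a, 2) P"
  by (rule exI[of _ "[(a + 1, 1), (a, 1), (a + 1, 2), (a + 1, 3), (a, 3), (a, 2)]"]) (simp add: good_facts insert_commute; blast)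

lemma w2_11_03: "\<exists>P. good a (a + 1) (a + 1, 1) (a, 3) P"
  by (rule exI[of _ "[(a + 1, 1), (a, 1), (a, 2), (a + 1, 2), (a + 1, 3), (a, 3)]"]) (simp add: good_facts insert_commute; blast)

lemma w2_11_12: "\<exists>P. good a (a + 1) (a + 1, 1) (a + 1, 2) P"
  by (rule exI[of _ "[(a + 1, 1), (a, 1), (a, 2), (a, 3), (a + 1, 3), (a + 1, 2)]"]) (simp add: good_facts insert_commute; blast)

lemma w2_11_13: "\<exists>P. good a (a + 1) (a + 1, 1) (a + 1, 3) P"
  by (rule exI[of _ "[(a + 1, 1), (a, 1), (a, 2), (a, 3), (a + 1, 2), (a + 1, 3)]"]) (simp add: good_facts insert_commute; blast)

lemma w2_12_01: "\<exists>P. good a (a + 1) (a + 1, 2) (a, 1) P"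
  by (rule exI[of _ "[(a + 1, 2), (a + 1, 3), (a, 3), (a, 2), (a + 1, 1), (a, 1)]"]) (simp add: good_facts insert_commute; blast)

lemma w2_12_03: "\<exists>P. good a (a + 1) (a + 1, 2) (a, 3) P"
  by (rule exI[of _ "[(a + 1, 2), (a + 1, 1), (a, 1), (a, 2), (a + 1, 3), (a, 3)]"]) (simp add: good_facts insert_commute; blast)

lemma w2_12_11: "\<exists>P. good a (a + 1) (a + 1, 2) (a + 1, 1) P"
  by (rule exI[of _ "[(a + 1, 2), (a + 1, 3), (a, 3), (a, 2), (a, 1), (a + 1, 1)]"]) (simp add: good_facts insert_commute; blast)

lemma w2_12_13: "\<exists>P. good a (a + 1) (a + 1, 2) (a + 1, 3) P"
  by (rule exI[of _ "[(a + 1, 2), (a + 1, 1), (a, 1), (a, 2), (a, 3), (a + 1, 3)]"]) (simp add: good_facts insert_commute; blast)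

lemma w2_13_01: "\<exists>P. good a (a + 1) (a + 1, 3) (a, 1) P"
  by (rule exI[of _ "[(a + 1, 3), (a, 2), (a, 3), (a + 1, 2), (a + 1, 1), (a, 1)]"]) (simp add: good_facts insert_commute; blast)

lemma w2_13_02: "\<exists>P. good a (a + 1) (a + 1, 3) (a, 2) P"
  by (rule exI[of _ "[(a + 1, 3), (a, 3), (a + 1, 2), (a + 1, 1), (a, 1), (a, 2)]"]) (simp add: good_facts insert_commute; blast)

lemma w2_13_03: "\<exists>P. good a (a + 1) (a + 1, 3) (a, 3) P"
  by (rule exI[of _ "[(a + 1, 3), (a, 2), (a, 1), (a + 1, 1), (a + 1, 2), (a, 3)]"]) (simp add: good_facts insert_commute; blast)

lemma w2_13_11: "\<exists>P. good a (a + 1) (a + 1, 3) (a + 1, 1) P"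
  by (rule exI[of _ "[(a + 1, 3), (a, 3), (a, 2), (a, 1), (a + 1, 2), (a + 1, 1)]"]) (simp add: good_facts insert_commute; blast)

lemma w2_13_12: "\<exists>P. good a (a + 1) (a + 1, 3) (a + 1, 2) P"
  by (rule exI[of _ "[(a + 1, 3), (a, 3), (a, 2), (a, 1), (a + 1, 1), (a + 1, 2)]"]) (simp add: good_facts insert_commute; blast)

lemmas base2_ws = w2_01_02 w2_01_03 w2_01_11 w2_01_12 w2_01_13 w2_02_01 w2_02_03 w2_02_11 w2_02_13 w2_03_01 w2_03_02 w2_03_11 w2_03_12 w2_03_13 w2_11_01 w2_11_02 w2_11_03 w2_11_12 w2_11_13 w2_12_01 w2_12_03 w2_12_11 w2_12_13 w2_13_01 w2_13_02 w2_13_03 w2_13_11 w2_13_12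

lemma w3_01_02: "\<exists>P. good a (a + 2) (a, 1) (a, 2) P"
  by (rule exI[of _ "[(a, 1), (a + 1, 1), (a + 1, 2), (a + 2, 1), (a + 2, 2), (a + 2, 3), (a + 1, 3), (a, 3), (a, 2)]"]) (simp add: good_facts insert_commute; blast)

lemma w3_01_03: "\<exists>P. good a (a + 2) (a, 1) (a, 3) P"
  by (rule exI[of _ "[(a, 1), (a, 2), (a + 1, 1), (a + 1, 2), (a + 2, 1), (a + 2, 2), (a + 2, 3), (a + 1, 3), (a, 3)]"]) (simp add: good_facts insert_commute; blast)

lemma w3_01_11: "\<exists>P. good a (a + 2) (a, 1) (a + 1, 1) P"
  by (rule exI[of _ "[(a, 1), (a, 2), (a, 3), (a + 1, 2), (a + 1, 3), (a + 2, 3), (a + 2, 2), (a + 2, 1), (a + 1, 1)]"]) (simp add: good_facts insert_commute; blast)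

lemma w3_01_12: "\<exists>P. good a (a + 2) (a, 1) (a + 1, 2) P"
  by (rule exI[of _ "[(a, 1), (a, 2), (a, 3), (a + 1, 3), (a + 2, 3), (a + 2, 2), (a + 1, 1), (a + 2, 1), (a + 1, 2)]"]) (simp add: good_facts insert_commute; blast)

lemma w3_01_13: "\<exists>P. good a (a + 2) (a, 1) (a + 1, 3) P"
  by (rule exI[of _ "[(a, 1), (a, 2), (a, 3), (a + 1, 2), (a + 1, 1), (a + 2, 1), (a + 2, 2), (a + 2, 3), (a + 1, 3)]"]) (simp add: good_facts insert_commute; blast)

lemma w3_01_21: "\<exists>P. good a (a + 2) (a, 1) (a + 2, 1) P"
  by (rule exI[of _ "[(a, 1), (a, 2), (a, 3), (a + 1, 2), (a + 1, 3), (a + 2, 3), (a + 2, 2), (a + 1, 1), (a + 2, 1)]"]) (simp add: good_facts insert_commute; blast)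

lemma w3_01_22: "\<exists>P. good a (a + 2) (a, 1) (a + 2, 2) P"
  by (rule exI[of _ "[(a, 1), (a, 2), (a, 3), (a + 1, 3), (a + 2, 3), (a + 1, 2), (a + 1, 1), (a + 2, 1), (a + 2, 2)]"]) (simp add: good_facts insert_commute; blast)

lemma w3_01_23: "\<exists>P. good a (a + 2) (a, 1) (a + 2, 3) P"
  by (rule exI[of _ "[(a, 1), (a, 2), (a, 3), (a + 1, 2), (a + 1, 1), (a + 2, 1), (a + 2, 2), (a + 1, 3), (a + 2, 3)]"]) (simp add: good_facts insert_commute; blast)

lemma w3_02_01: "\<exists>P. good a (a + 2) (a, 2) (a, 1) P"
  by (rule exI[of _ "[(a, 2), (a, 3), (a + 1, 2), (a + 1, 3), (a + 2, 3), (a + 2, 2), (a + 2, 1), (a + 1, 1), (a, 1)]"]) (simp add: good_facts insert_commute; blast)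

lemma w3_02_03: "\<exists>P. good a (a + 2) (a, 2) (a, 3) P"
  by (rule exI[of _ "[(a, 2), (a, 1), (a + 1, 1), (a + 1, 2), (a + 2, 1), (a + 2, 2), (a + 2, 3), (a + 1, 3), (a, 3)]"]) (simp add: good_facts insert_commute; blast)

lemma w3_02_11: "\<exists>P. good a (a + 2) (a, 2) (a + 1, 1) P"
  by (rule exI[of _ "[(a, 2), (a, 1), (a + 1, 2), (a, 3), (a + 1, 3), (a + 2, 3), (a + 2, 2), (a + 2, 1), (a + 1, 1)]"]) (simp add: good_facts insert_commute; blast)

lemma w3_02_12: "\<exists>P. good a (a + 2) (a, 2) (a + 1, 2) P"
  by (rule exI[of _ "[(a, 2), (a, 1), (a + 1, 1), (a + 2, 1), (a + 2, 2), (a + 2, 3), (a + 1, 3), (a, 3), (a + 1, 2)]"]) (simp add: good_facts insert_commute; blast)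

lemma w3_02_13: "\<exists>P. good a (a + 2) (a, 2) (a + 1, 3) P"
  by (rule exI[of _ "[(a, 2), (a, 1), (a + 1, 1), (a + 2, 1), (a + 2, 2), (a + 2, 3), (a + 1, 2), (a, 3), (a + 1, 3)]"]) (simp add: good_facts insert_commute; blast)

lemma w3_02_21: "\<exists>P. good a (a + 2) (a, 2) (a + 2, 1) P"
  by (rule exI[of _ "[(a, 2), (a, 1), (a + 1, 1), (a + 1, 2), (a, 3), (a + 1, 3), (a + 2, 3), (a + 2, 2), (a + 2, 1)]"]) (simp add: good_facts insert_commute; blast)

lemma w3_02_22: "\<exists>P. good a (a + 2) (a, 2) (a + 2, 2) P"
  by (rule exI[of _ "[(a, 2), (a, 1), (a + 1, 1), (a + 2, 1), (a + 1, 2), (a, 3), (a + 1, 3), (a + 2, 3), (a + 2, 2)]"]) (simp add: good_facts insert_commute; blast)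

lemma w3_02_23: "\<exists>P. good a (a + 2) (a, 2) (a + 2, 3) P"
  by (rule exI[of _ "[(a, 2), (a, 1), (a + 1, 1), (a + 2, 1), (a + 1, 2), (a, 3), (a + 1, 3), (a + 2, 2), (a + 2, 3)]"]) (simp add: good_facts insert_commute; blast)

lemma w3_03_01: "\<exists>P. good a (a + 2) (a, 3) (a, 1) P"
  by (rule exI[of _ "[(a, 3), (a, 2), (a + 1, 1), (a + 2, 1), (a + 2, 2), (a + 1, 3), (a + 2, 3), (a + 1, 2), (a, 1)]"]) (simp add: good_facts insert_commute; blast)

lemma w3_03_02: "\<exists>P. good a (a + 2) (a, 3) (a, 2) P"
  by (rule exI[of _ "[(a, 3), (a + 1, 2), (a + 1, 3), (a + 2, 3), (a + 2, 2), (a + 2, 1), (a + 1, 1), (a, 1), (a, 2)]"]) (simp add: good_facts insert_commute; blast)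

lemma w3_03_11: "\<exists>P. good a (a + 2) (a, 3) (a + 1, 1) P"
  by (rule exI[of _ "[(a, 3), (a, 2), (a, 1), (a + 1, 2), (a + 1, 3), (a + 2, 3), (a + 2, 2), (a + 2, 1), (a + 1, 1)]"]) (simp add: good_facts insert_commute; blast)

lemma w3_03_12: "\<exists>P. good a (a + 2) (a, 3) (a + 1, 2) P"
  by (rule exI[of _ "[(a, 3), (a, 2), (a, 1), (a + 1, 1), (a + 2, 1), (a + 2, 2), (a + 1, 3), (a + 2, 3), (a + 1, 2)]"]) (simp add: good_facts insert_commute; blast)

lemma w3_03_13: "\<exists>P. good a (a + 2) (a, 3) (a + 1, 3) P"
  by (rule exI[of _ "[(a, 3), (a, 2), (a, 1), (a + 1, 1), (a + 1, 2), (a + 2, 1), (a + 2, 2), (a + 2, 3), (a + 1, 3)]"]) (simp add: good_facts insert_commute; blast)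

lemma w3_03_21: "\<exists>P. good a (a + 2) (a, 3) (a + 2, 1) P"
  by (rule exI[of _ "[(a, 3), (a, 2), (a, 1), (a + 1, 1), (a + 1, 2), (a + 1, 3), (a + 2, 3), (a + 2, 2), (a + 2, 1)]"]) (simp add: good_facts insert_commute; blast)

lemma w3_03_22: "\<exists>P. good a (a + 2) (a, 3) (a + 2, 2) P"
  by (rule exI[of _ "[(a, 3), (a, 2), (a, 1), (a + 1, 1), (a + 2, 1), (a + 1, 2), (a + 1, 3), (a + 2, 3), (a + 2, 2)]"]) (simp add: good_facts insert_commute; blast)

lemma w3_03_23: "\<exists>P. good a (a + 2) (a, 3) (a + 2, 3) P"
  by (rule exI[of _ "[(a, 3), (a, 2), (a, 1), (a + 1, 1), (a + 1, 2), (a + 2, 1), (a + 2, 2), (a + 1, 3), (a + 2, 3)]"]) (simp add: good_facts insert_commute; blast)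

lemma w3_11_01: "\<exists>P. good a (a + 2) (a + 1, 1) (a, 1) P"
  by (rule exI[of _ "[(a + 1, 1), (a, 2), (a, 3), (a + 1, 3), (a + 2, 3), (a + 2, 2), (a + 2, 1), (a + 1, 2), (a, 1)]"]) (simp add: good_facts insert_commute; blast)

lemma w3_11_02: "\<exists>P. good a (a + 2) (a + 1, 1) (a, 2) P"
  by (rule exI[of _ "[(a + 1, 1), (a, 1), (a + 1, 2), (a + 2, 1), (a + 2, 2), (a + 2, 3), (a + 1, 3), (a, 3), (a, 2)]"]) (simp add: good_facts insert_commute; blast)

lemma w3_11_03: "\<exists>P. good a (a + 2) (a + 1, 1) (a, 3) P"
  by (rule exI[of _ "[(a + 1, 1), (a, 1), (a, 2), (a + 1, 2), (a + 2, 1), (a + 2, 2), (a + 2, 3), (a + 1, 3), (a, 3)]"]) (simp add: good_facts insert_commute; blast)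

lemma w3_11_12: "\<exists>P. good a (a + 2) (a + 1, 1) (a + 1, 2) P"
  by (rule exI[of _ "[(a + 1, 1), (a, 1), (a, 2), (a, 3), (a + 1, 3), (a + 2, 3), (a + 2, 2), (a + 2, 1), (a + 1, 2)]"]) (simp add: good_facts insert_commute; blast)

lemma w3_11_13: "\<exists>P. good a (a + 2) (a + 1, 1) (a + 1, 3) P"
  by (rule exI[of _ "[(a + 1, 1), (a, 1), (a, 2), (a, 3), (a + 1, 2), (a + 2, 1), (a + 2, 2), (a + 2, 3), (a + 1, 3)]"]) (simp add: good_facts insert_commute; blast)

lemma w3_11_21: "\<exists>P. good a (a + 2) (a + 1, 1) (a + 2, 1) P"
  by (rule exI[of _ "[(a + 1, 1), (a, 1), (a, 2), (a, 3), (a + 1, 2), (a + 1, 3), (a + 2, 3), (a + 2, 2), (a + 2, 1)]"]) (simp add: good_facts insert_commute; blast)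

lemma w3_11_22: "\<exists>P. good a (a + 2) (a + 1, 1) (a + 2, 2) P"
  by (rule exI[of _ "[(a + 1, 1), (a, 1), (a, 2), (a, 3), (a + 1, 3), (a + 2, 3), (a + 1, 2), (a + 2, 1), (a + 2, 2)]"]) (simp add: good_facts insert_commute; blast)

lemma w3_11_23: "\<exists>P. good a (a + 2) (a + 1, 1) (a + 2, 3) P"
  by (rule exI[of _ "[(a + 1, 1), (a, 1), (a, 2), (a, 3), (a + 1, 2), (a + 2, 1), (a + 2, 2), (a + 1, 3), (a + 2, 3)]"]) (simp add: good_facts insert_commute; blast)

lemma w3_12_01: "\<exists>P. good a (a + 2) (a + 1, 2) (a, 1) P"
  by (rule exI[of _ "[(a + 1, 2), (a, 2), (a, 3), (a + 1, 3), (a + 2, 3), (a + 2, 2), (a + 2, 1), (a + 1, 1), (a, 1)]"]) (simp add: good_facts insert_commute; blast)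

lemma w3_12_02: "\<exists>P. good a (a + 2) (a + 1, 2) (a, 2) P"
  by (rule exI[of _ "[(a + 1, 2), (a, 1), (a + 1, 1), (a + 2, 1), (a + 2, 2), (a + 2, 3), (a + 1, 3), (a, 3), (a, 2)]"]) (simp add: good_facts insert_commute; blast)

lemma w3_12_03: "\<exists>P. good a (a + 2) (a + 1, 2) (a, 3) P"
  by (rule exI[of _ "[(a + 1, 2), (a, 1), (a, 2), (a + 1, 1), (a + 2, 1), (a + 2, 2), (a + 2, 3), (a + 1, 3), (a, 3)]"]) (simp add: good_facts insert_commute; blast)

lemma w3_12_11: "\<exists>P. good a (a + 2) (a + 1, 2) (a + 1, 1) P"
  by (rule exI[of _ "[(a + 1, 2), (a, 1), (a, 2), (a, 3), (a + 1, 3), (a + 2, 3), (a + 2, 2), (a + 2, 1), (a + 1, 1)]"]) (simp add: good_facts insert_commute; blast)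

lemma w3_12_13: "\<exists>P. good a (a + 2) (a + 1, 2) (a + 1, 3) P"
  by (rule exI[of _ "[(a + 1, 2), (a, 3), (a, 2), (a, 1), (a + 1, 1), (a + 2, 1), (a + 2, 2), (a + 2, 3), (a + 1, 3)]"]) (simp add: good_facts insert_commute; blast)

lemma w3_12_21: "\<exists>P. good a (a + 2) (a + 1, 2) (a + 2, 1) P"
  by (rule exI[of _ "[(a + 1, 2), (a, 1), (a, 2), (a, 3), (a + 1, 3), (a + 2, 3), (a + 2, 2), (a + 1, 1), (a + 2, 1)]"]) (simp add: good_facts insert_commute; blast)

lemma w3_12_22: "\<exists>P. good a (a + 2) (a + 1, 2) (a + 2, 2) P"
  by (rule exI[of _ "[(a + 1, 2), (a + 2, 1), (a + 1, 1), (a, 1), (a, 2), (a, 3), (a + 1, 3), (a + 2, 3), (a + 2, 2)]"]) (simp add: good_facts insert_commute; blast)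

lemma w3_12_23: "\<exists>P. good a (a + 2) (a + 1, 2) (a + 2, 3) P"
  by (rule exI[of _ "[(a + 1, 2), (a, 3), (a, 2), (a, 1), (a + 1, 1), (a + 2, 1), (a + 2, 2), (a + 1, 3), (a + 2, 3)]"]) (simp add: good_facts insert_commute; blast)

lemma w3_13_01: "\<exists>P. good a (a + 2) (a + 1, 3) (a, 1) P"
  by (rule exI[of _ "[(a + 1, 3), (a, 2), (a, 3), (a + 1, 2), (a + 2, 3), (a + 2, 2), (a + 2, 1), (a + 1, 1), (a, 1)]"]) (simp add: good_facts insert_commute; blast)

lemma w3_13_02: "\<exists>P. good a (a + 2) (a + 1, 3) (a, 2) P"
  by (rule exI[of _ "[(a + 1, 3), (a, 3), (a + 1, 2), (a + 2, 3), (a + 2, 2), (a + 2, 1), (a + 1, 1), (a, 1), (a, 2)]"]) (simp add: good_facts insert_commute; blast)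

lemma w3_13_03: "\<exists>P. good a (a + 2) (a + 1, 3) (a, 3) P"
  by (rule exI[of _ "[(a + 1, 3), (a, 2), (a, 1), (a + 1, 1), (a + 2, 1), (a + 2, 2), (a + 2, 3), (a + 1, 2), (a, 3)]"]) (simp add: good_facts insert_commute; blast)

lemma w3_13_11: "\<exists>P. good a (a + 2) (a + 1, 3) (a + 1, 1) P"
  by (rule exI[of _ "[(a + 1, 3), (a, 3), (a, 2), (a, 1), (a + 1, 2), (a + 2, 3), (a + 2, 2), (a + 2, 1), (a + 1, 1)]"]) (simp add: good_facts insert_commute; blast)

lemma w3_13_12: "\<exists>P. good a (a + 2) (a + 1, 3) (a + 1, 2) P"
  by (rule exI[of _ "[(a + 1, 3), (a, 3), (a, 2), (a, 1), (a + 1, 1), (a + 2, 1), (a + 2, 2), (a + 2, 3), (a + 1, 2)]"]) (simp add: good_facts insert_commute; blast)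

lemma w3_13_21: "\<exists>P. good a (a + 2) (a + 1, 3) (a + 2, 1) P"
  by (rule exI[of _ "[(a + 1, 3), (a, 3), (a, 2), (a, 1), (a + 1, 1), (a + 1, 2), (a + 2, 3), (a + 2, 2), (a + 2, 1)]"]) (simp add: good_facts insert_commute; blast)

lemma w3_13_22: "\<exists>P. good a (a + 2) (a + 1, 3) (a + 2, 2) P"
  by (rule exI[of _ "[(a + 1, 3), (a, 3), (a, 2), (a, 1), (a + 1, 1), (a + 2, 1), (a + 1, 2), (a + 2, 3), (a + 2, 2)]"]) (simp add: good_facts insert_commute; blast)

lemma w3_13_23: "\<exists>P. good a (a + 2) (a + 1, 3) (a + 2, 3) P"
  by (rule exI[of _ "[(a + 1, 3), (a, 2), (a, 3), (a + 1, 2), (a, 1), (a + 1, 1), (a + 2, 1), (a + 2, 2), (a + 2, 3)]"]) (simp add: good_facts insert_commute; blast)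

lemma w3_21_01: "\<exists>P. good a (a + 2) (a + 2, 1) (a, 1) P"
  by (rule exI[of _ "[(a + 2, 1), (a + 1, 1), (a, 2), (a, 3), (a + 1, 3), (a + 2, 2), (a + 2, 3), (a + 1, 2), (a, 1)]"]) (simp add: good_facts insert_commute; blast)

lemma w3_21_02: "\<exists>P. good a (a + 2) (a + 2, 1) (a, 2) P"
  by (rule exI[of _ "[(a + 2, 1), (a + 1, 1), (a, 1), (a + 1, 2), (a + 2, 2), (a + 2, 3), (a + 1, 3), (a, 3), (a, 2)]"]) (simp add: good_facts insert_commute; blast)

lemma w3_21_03: "\<exists>P. good a (a + 2) (a + 2, 1) (a, 3) P"
  by (rule exI[of _ "[(a + 2, 1), (a + 1, 1), (a, 1), (a, 2), (a + 1, 2), (a + 2, 2), (a + 2, 3), (a + 1, 3), (a, 3)]"]) (simp add: good_facts insert_commute; blast)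

lemma w3_21_11: "\<exists>P. good a (a + 2) (a + 2, 1) (a + 1, 1) P"
  by (rule exI[of _ "[(a + 2, 1), (a + 1, 2), (a, 1), (a, 2), (a, 3), (a + 1, 3), (a + 2, 3), (a + 2, 2), (a + 1, 1)]"]) (simp add: good_facts insert_commute; blast)

lemma w3_21_12: "\<exists>P. good a (a + 2) (a + 2, 1) (a + 1, 2) P"
  by (rule exI[of _ "[(a + 2, 1), (a + 1, 1), (a, 1), (a, 2), (a, 3), (a + 1, 3), (a + 2, 2), (a + 2, 3), (a + 1, 2)]"]) (simp add: good_facts insert_commute; blast)

lemma w3_21_13: "\<exists>P. good a (a + 2) (a + 2, 1) (a + 1, 3) P"
  by (rule exI[of _ "[(a + 2, 1), (a + 1, 1), (a, 1), (a, 2), (a, 3), (a + 1, 2), (a + 2, 2), (a + 2, 3), (a + 1, 3)]"]) (simp add: good_facts insert_commute; blast)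

lemma w3_21_22: "\<exists>P. good a (a + 2) (a + 2, 1) (a + 2, 2) P"
  by (rule exI[of _ "[(a + 2, 1), (a + 1, 1), (a, 1), (a, 2), (a, 3), (a + 1, 2), (a + 1, 3), (a + 2, 3), (a + 2, 2)]"]) (simp add: good_facts insert_commute; blast)

lemma w3_21_23: "\<exists>P. good a (a + 2) (a + 2, 1) (a + 2, 3) P"
  by (rule exI[of _ "[(a + 2, 1), (a + 1, 1), (a, 1), (a, 2), (a, 3), (a + 1, 2), (a + 1, 3), (a + 2, 2), (a + 2, 3)]"]) (simp add: good_facts insert_commute; blast)

lemma w3_22_01: "\<exists>P. good a (a + 2) (a + 2, 2) (a, 1) P"
  by (rule exI[of _ "[(a + 2, 2), (a + 2, 1), (a + 1, 1), (a, 2), (a, 3), (a + 1, 3), (a + 2, 3), (a + 1, 2), (a, 1)]"]) (simp add: good_facts insert_commute; blast)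

lemma w3_22_02: "\<exists>P. good a (a + 2) (a + 2, 2) (a, 2) P"
  by (rule exI[of _ "[(a + 2, 2), (a + 2, 1), (a + 1, 1), (a, 1), (a + 1, 2), (a + 2, 3), (a + 1, 3), (a, 3), (a, 2)]"]) (simp add: good_facts insert_commute; blast)

lemma w3_22_03: "\<exists>P. good a (a + 2) (a + 2, 2) (a, 3) P"
  by (rule exI[of _ "[(a + 2, 2), (a + 2, 1), (a + 1, 1), (a, 1), (a, 2), (a + 1, 2), (a + 2, 3), (a + 1, 3), (a, 3)]"]) (simp add: good_facts insert_commute; blast)

lemma w3_22_11: "\<exists>P. good a (a + 2) (a + 2, 2) (a + 1, 1) P"
  by (rule exI[of _ "[(a + 2, 2), (a + 2, 1), (a + 1, 2), (a + 2, 3), (a + 1, 3), (a, 3), (a, 2), (a, 1), (a + 1, 1)]"]) (simp add: good_facts insert_commute; blast)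

lemma w3_22_12: "\<exists>P. good a (a + 2) (a + 2, 2) (a + 1, 2) P"
  by (rule exI[of _ "[(a + 2, 2), (a + 2, 1), (a + 1, 1), (a, 1), (a, 2), (a, 3), (a + 1, 3), (a + 2, 3), (a + 1, 2)]"]) (simp add: good_facts insert_commute; blast)

lemma w3_22_13: "\<exists>P. good a (a + 2) (a + 2, 2) (a + 1, 3) P"
  by (rule exI[of _ "[(a + 2, 2), (a + 2, 1), (a + 1, 1), (a, 1), (a, 2), (a, 3), (a + 1, 2), (a + 2, 3), (a + 1, 3)]"]) (simp add: good_facts insert_commute; blast)

lemma w3_22_21: "\<exists>P. good a (a + 2) (a + 2, 2) (a + 2, 1) P"
  by (rule exI[of _ "[(a + 2, 2), (a + 2, 3), (a + 1, 2), (a, 3), (a + 1, 3), (a, 2), (a, 1), (a + 1, 1), (a + 2, 1)]"]) (simp add: good_facts insert_commute; blast)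

lemma w3_22_23: "\<exists>P. good a (a + 2) (a + 2, 2) (a + 2, 3) P"
  by (rule exI[of _ "[(a + 2, 2), (a + 2, 1), (a + 1, 1), (a, 1), (a, 2), (a, 3), (a + 1, 2), (a + 1, 3), (a + 2, 3)]"]) (simp add: good_facts insert_commute; blast)

lemma w3_23_01: "\<exists>P. good a (a + 2) (a + 2, 3) (a, 1) P"
  by (rule exI[of _ "[(a + 2, 3), (a + 1, 2), (a, 2), (a, 3), (a + 1, 3), (a + 2, 2), (a + 2, 1), (a + 1, 1), (a, 1)]"]) (simp add: good_facts insert_commute; blast)

lemma w3_23_02: "\<exists>P. good a (a + 2) (a + 2, 3) (a, 2) P"
  by (rule exI[of _ "[(a + 2, 3), (a + 1, 2), (a, 1), (a + 1, 1), (a + 2, 1), (a + 2, 2), (a + 1, 3), (a, 3), (a, 2)]"]) (simp add: good_facts insert_commute; blast)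

lemma w3_23_03: "\<exists>P. good a (a + 2) (a + 2, 3) (a, 3) P"
  by (rule exI[of _ "[(a + 2, 3), (a + 1, 2), (a, 1), (a, 2), (a + 1, 1), (a + 2, 1), (a + 2, 2), (a + 1, 3), (a, 3)]"]) (simp add: good_facts insert_commute; blast)

lemma w3_23_11: "\<exists>P. good a (a + 2) (a + 2, 3) (a + 1, 1) P"
  by (rule exI[of _ "[(a + 2, 3), (a + 1, 2), (a, 1), (a, 2), (a, 3), (a + 1, 3), (a + 2, 2), (a + 2, 1), (a + 1, 1)]"]) (simp add: good_facts insert_commute; blast)

lemma w3_23_12: "\<exists>P. good a (a + 2) (a + 2, 3) (a + 1, 2) P"
  by (rule exI[of _ "[(a + 2, 3), (a + 1, 3), (a, 3), (a, 2), (a, 1), (a + 1, 1), (a + 2, 1), (a + 2, 2), (a + 1, 2)]"]) (simp add: good_facts insert_commute; blast)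

lemma w3_23_13: "\<exists>P. good a (a + 2) (a + 2, 3) (a + 1, 3) P"
  by (rule exI[of _ "[(a + 2, 3), (a + 1, 2), (a, 3), (a, 2), (a, 1), (a + 1, 1), (a + 2, 1), (a + 2, 2), (a + 1, 3)]"]) (simp add: good_facts insert_commute; blast)

lemma w3_23_21: "\<exists>P. good a (a + 2) (a + 2, 3) (a + 2, 1) P"
  by (rule exI[of _ "[(a + 2, 3), (a + 1, 2), (a, 1), (a + 1, 1), (a, 2), (a, 3), (a + 1, 3), (a + 2, 2), (a + 2, 1)]"]) (simp add: good_facts insert_commute; blast)

lemma w3_23_22: "\<exists>P. good a (a + 2) (a + 2, 3) (a + 2, 2) P"
  by (rule exI[of _ "[(a + 2, 3), (a + 1, 2), (a, 3), (a + 1, 3), (a, 2), (a, 1), (a + 1, 1), (a + 2, 1), (a + 2, 2)]"]) (simp add: good_facts insert_commute; blast)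

lemmas base3_ws = w3_01_02 w3_01_03 w3_01_11 w3_01_12 w3_01_13 w3_01_21 w3_01_22 w3_01_23 w3_02_01 w3_02_03 w3_02_11 w3_02_12 w3_02_13 w3_02_21 w3_02_22 w3_02_23 w3_03_01 w3_03_02 w3_03_11 w3_03_12 w3_03_13 w3_03_21 w3_03_22 w3_03_23 w3_11_01 w3_11_02 w3_11_03 w3_11_12 w3_11_13 w3_11_21 w3_11_22 w3_11_23 w3_12_01 w3_12_02 w3_12_03 w3_12_11 w3_12_13 w3_12_21 w3_12_22 w3_12_23 w3_13_01 w3_13_02 w3_13_03 w3_13_11 w3_13_12 w3_13_21 w3_13_22 w3_13_23 w3_21_01 w3_21_02 w3_21_03 w3_21_11 w3_21_12 w3_21_13 w3_21_22 w3_21_23 w3_22_01 w3_22_02 w3_22_03 w3_22_11 w3_22_12 w3_22_13 w3_22_21 w3_22_23 w3_23_01 w3_23_02 w3_23_03 w3_23_11 w3_23_12 w3_23_13 w3_23_21 w3_23_22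

lemma base2:
  assumes "s \<in> R a (a + 1)" "t \<in> R a (a + 1)" "s \<noteq> t"
    "\<not> (snd s = 2 \<and> snd t = 2 \<and> fst s \<noteq> fst t)"
  shows "\<exists>P. good a (a + 1) s t P"
proof -
  from assms(1,2) have "s \<in> {(a, 1), (a, 2), (a, 3), (a + 1, 1), (a + 1, 2), (a + 1, 3)}"
    "t \<in> {(a, 1), (a, 2), (a, 3), (a + 1, 1), (a + 1, 2), (a + 1, 3)}"
    by (simp_all only: R2)
  then show ?thesis using assms(3,4)
    by (elim insertE emptyE; simp add: base2_ws)
qed

lemma base3:
  assumes "s \<in> R a (a + 2)" "t \<in> R a (a + 2)" "s \<noteq> t"
  shows "\<exists>P. good a (a + 2) s t P"
proof -
  from assms(1,2) have "s \<in> {(a, 1), (a, 2), (a, 3), (a + 1, 1), (a + 1, 2), (a + 1, 3), (a + 2, 1), (a + 2, 2), (a + 2, 3)}"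
    "t \<in> {(a, 1), (a, 2), (a, 3), (a + 1, 1), (a + 1, 2), (a + 1, 3), (a + 2, 1), (a + 2, 2), (a + 2, 3)}"
    by (simp_all only: R3)
  then show ?thesis using assms(3)
    by (elim insertE emptyE; simp add: base3_ws)
qed

lemma ins_gen:
  assumes "hp V s t (A @ B)" "A \<noteq> []" "B \<noteq> []" "T \<noteq> []" "distinct T" "set T \<inter> V = {}"
    "sg_adj (last A) (hd T)" "sg_adj (last T) (hd B)" "\<forall>e\<in>set (pairs T). sg_adj (fst e) (snd e)"
  shows "hp (V \<union> set T) s t (A @ T @ B) \<and> set (pairs (A @ B)) - {(last A, hd B)} \<subseteq> set (pairs (A @ T @ B))
     \<and> set (pairs T) \<subseteq> set (pairs (A @ T @ B))"
proof -
  have pAB: "pairs (A @ B) = pairs A @ [(last A, hd B)] @ pairs B"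
    using assms(2,3) by (simp add: pairs_append)
  have pATB: "pairs (A @ T @ B) = pairs A @ [(last A, hd T)] @ pairs T @ [(last T, hd B)] @ pairs B"
    using assms(2,3,4) by (simp add: pairs_append)
  have h: "A @ B \<noteq> []" "distinct (A @ B)" "set (A @ B) = V" "hd (A @ B) = s" "last (A @ B) = t"
    "\<forall>e\<in>set (pairs (A @ B)). sg_adj (fst e) (snd e)"
    using assms(1) unfolding hp_def by blast+
  have d: "distinct (A @ T @ B)" using h(2,3) assms(5,6) by auto
  have st: "set (A @ T @ B) = V \<union> set T" using h(3) by auto
  have hd: "hd (A @ T @ B) = s" using h(4) assms(2) by simp
  have lt: "last (A @ T @ B) = t" using h(5) assms(3) by simp
  have ad: "\<forall>e\<in>set (pairs (A @ T @ B)). sg_adj (fst e) (snd e)"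
    using h(6) assms(7,8,9) unfolding pAB pATB by auto
  have "A @ T @ B \<noteq> []" using assms(2) by simp
  then have "hp (V \<union> set T) s t (A @ T @ B)" using d st hd lt ad unfolding hp_def by blast
  moreover have "set (pairs (A @ B)) - {(last A, hd B)} \<subseteq> set (pairs (A @ T @ B))"
    unfolding pAB pATB by auto
  moreover have "set (pairs T) \<subseteq> set (pairs (A @ T @ B))" unfolding pATB by auto
  ultimately show ?thesis by blast
qed

definition ed :: "vertex list \<Rightarrow> vertex \<Rightarrow> vertex \<Rightarrow> bool" where
  "ed P u v \<longleftrightarrow> (u, v) \<in> set (pairs P) \<or> (v, u) \<in> set (pairs P)"

lemma ins_col:
  assumes hp: "hp V s t P" and e: "((d, y), (d, y')) \<in> set (pairs P)"
    and Vy: "\<forall>x z. (x, z) \<in> V \<longrightarrow> 1 \<le> z \<and> z \<le> 3"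
    and Vc: "\<forall>z. (c, z) \<notin> V" and cd: "\<bar>c - d\<bar> = 1"
  shows "\<exists>Q. hp (V \<union> {(c, 1), (c, 2), (c, 3)}) s t Q \<and> set (pairs P) - {((d, y), (d, y'))} \<subseteq> set (pairs Q)
     \<and> ed Q (c, 1) (c, 2) \<and> ed Q (c, 2) (c, 3)"
proof -
  have "\<exists>xs ys. P = xs @ (d, y) # (d, y') # ys" using e by (simp only: in_pairs)
  then obtain xs ys where P: "P = xs @ (d, y) # (d, y') # ys" by blast
  have sP: "set P = V" and allad: "\<forall>e\<in>set (pairs P). sg_adj (fst e) (snd e)"
    using hp unfolding hp_def by blast+
  have mem: "(d, y) \<in> V" "(d, y') \<in> V" using pairs_elems[OF e] unfolding sP by simp_all
  have adj: "sg_adj (d, y) (d, y')" using bspec[OF allad e] by simp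
  then have yy: "y \<noteq> y'" "\<bar>y - y'\<bar> \<le> 1" by (auto simp: sg_adj_def)
  have yr: "1 \<le> y" "y \<le> 3" "1 \<le> y'" "y' \<le> 3" using Vy mem by auto
  define A where "A = xs @ [(d, y)]"
  define B where "B = (d, y') # ys"
  have PAB: "P = A @ B" by (simp add: P A_def B_def)
  have lA: "last A = (d, y)" "A \<noteq> []" by (simp_all add: A_def)
  have hB: "hd B = (d, y')" "B \<noteq> []" by (simp_all add: B_def)
  have hpAB: "hp V s t (A @ B)" using hp PAB by simp
  have c1: "(c, z) \<notin> V" for z using Vc by blast
  have cd': "c = d + 1 \<or> c = d - 1" using cd by arith
  consider (lt) "y < y'" | (gt) "y' < y" using yy by linarith
  then show ?thesis
  proof cases
    case lt
    define T where "T = [(c, 1), (c, 2), (c, 3::int)]"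
    have sT: "set T = {(c, 1), (c, 2), (c, 3)}" by (simp add: T_def)
    have pT: "set (pairs T) = {((c, 1), (c, 2)), ((c, 2), (c, 3))}" by (simp add: T_def)
    have a1: "sg_adj (last A) (hd T)" unfolding lA T_def sg_adj_def using lt yr cd' by auto
    have a2: "sg_adj (last T) (hd B)" unfolding hB T_def sg_adj_def using lt yr cd' by auto
    have a3: "\<forall>e\<in>set (pairs T). sg_adj (fst e) (snd e)" unfolding pT sg_adj_def by simp
    have dj: "set T \<inter> V = {}" unfolding sT using c1 by blast
    have H: "hp (V \<union> set T) s t (A @ T @ B) \<and> set (pairs (A @ B)) - {(last A, hd B)} \<subseteq> set (pairs (A @ T @ B))
     \<and> set (pairs T) \<subseteq> set (pairs (A @ T @ B))"
      by (rule ins_gen[OF hpAB lA(2) hB(2) _ _ dj a1 a2 a3]) (simp_all add: T_def)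
    show ?thesis
      apply (rule exI[of _ "A @ T @ B"])
      using H unfolding sT pT ed_def PAB[symmetric] lA hB by blast
  next
    case gt
    define T where "T = [(c, 3), (c, 2), (c, 1::int)]"
    have sT: "set T = {(c, 1), (c, 2), (c, 3)}" by (auto simp: T_def)
    have pT: "set (pairs T) = {((c, 3), (c, 2)), ((c, 2), (c, 1))}" by (simp add: T_def)
    have a1: "sg_adj (last A) (hd T)" unfolding lA T_def sg_adj_def using gt yr cd' by auto
    have a2: "sg_adj (last T) (hd B)" unfolding hB T_def sg_adj_def using gt yr cd' by auto
    have a3: "\<forall>e\<in>set (pairs T). sg_adj (fst e) (snd e)" unfolding pT sg_adj_def by simp
    have dj: "set T \<inter> V = {}" unfolding sT using c1 by blast
    have H: "hp (V \<union> set T) s t (A @ T @ B) \<and> set (pairs (A @ B)) - {(last A, hd B)} \<subseteq> set (pairs (A @ T @ B))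
     \<and> set (pairs T) \<subseteq> set (pairs (A @ T @ B))"
      by (rule ins_gen[OF hpAB lA(2) hB(2) _ _ dj a1 a2 a3]) (simp_all add: T_def)
    show ?thesis
      apply (rule exI[of _ "A @ T @ B"])
      using H unfolding sT pT ed_def PAB[symmetric] lA hB by blast
  qed
qed

lemma hp_concat:
  assumes h1: "hp V1 s u P1" and h2: "hp V2 v t P2" and dj: "V1 \<inter> V2 = {}" and uv: "sg_adj u v"
  shows "hp (V1 \<union> V2) s t (P1 @ P2) \<and> set (pairs P1) \<union> set (pairs P2) \<subseteq> set (pairs (P1 @ P2))"
proof -
  have a: "P1 \<noteq> []" "distinct P1" "set P1 = V1" "hd P1 = s" "last P1 = u"
    "\<forall>e\<in>set (pairs P1). sg_adj (fst e) (snd e)"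
    using h1 unfolding hp_def by blast+
  have b: "P2 \<noteq> []" "distinct P2" "set P2 = V2" "hd P2 = v" "last P2 = t"
    "\<forall>e\<in>set (pairs P2). sg_adj (fst e) (snd e)"
    using h2 unfolding hp_def by blast+
  have p: "pairs (P1 @ P2) = pairs P1 @ [(u, v)] @ pairs P2"
    using a(1,5) b(1,4) by (simp add: pairs_append)
  have "hp (V1 \<union> V2) s t (P1 @ P2)"
    unfolding hp_def p using a b dj uv by auto
  moreover have "set (pairs P1) \<union> set (pairs P2) \<subseteq> set (pairs (P1 @ P2))" unfolding p by auto
  ultimately show ?thesis by blast
qed

lemma vE_mono: "vE P c \<Longrightarrow> set (pairs P) \<subseteq> S \<Longrightarrow> S \<subseteq> set (pairs Q) \<Longrightarrow> vE Q c"
  unfolding vE_def by blast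

lemma main:
  "\<forall>a b s t. nat (b - a) = n \<longrightarrow> a < b \<longrightarrow> s \<in> R a b \<longrightarrow> t \<in> R a b \<longrightarrow> s \<noteq> t \<longrightarrow>
     \<not> (b = a + 1 \<and> snd s = 2 \<and> snd t = 2 \<and> fst s \<noteq> fst t) \<longrightarrow> (\<exists>P. good a b s t P)"
proof (induction n rule: less_induct)
  case (less n)
  have IH: "\<And>a b s t. nat (b - a) < n \<Longrightarrow> a < b \<Longrightarrow> s \<in> R a b \<Longrightarrow> t \<in> R a b \<Longrightarrow> s \<noteq> t \<Longrightarrow>
     \<not> (b = a + 1 \<and> snd s = 2 \<and> snd t = 2 \<and> fst s \<noteq> fst t) \<Longrightarrow> \<exists>P. good a b s t P"
    using less.IH by blast
  show ?case
  proof (intro allI impI)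
    fix a b s t
    assume n: "nat (b - a) = n" and ab: "a < b" and sR: "s \<in> R a b" and tR: "t \<in> R a b"
      and st: "s \<noteq> t" and nb: "\<not> (b = a + 1 \<and> snd s = 2 \<and> snd t = 2 \<and> fst s \<noteq> fst t)"
    obtain sx sy where s: "s = (sx, sy)" by fastforce
    obtain tx ty where t: "t = (tx, ty)" by fastforce
    have sr: "a \<le> sx" "sx \<le> b" "1 \<le> sy" "sy \<le> 3" using sR s by (auto simp: R_def)
    have tr: "a \<le> tx" "tx \<le> b" "1 \<le> ty" "ty \<le> 3" using tR t by (auto simp: R_def)
    show "\<exists>P. good a b s t P"
    proof (cases "b = a + 1")
      case True
      then show ?thesis using base2[of s a t] sR tR st nb by simp
    next
      case b1: False
      show ?thesis
      proof (cases "b = a + 2")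
        case True then show ?thesis using base3[of s a t] sR tR st by simp
      next
        case b2: False
        have b3: "a + 3 \<le> b" using ab b1 b2 by linarith
        show ?thesis
        proof (cases "sx \<noteq> a \<and> tx \<noteq> a")
          case True
          have sR': "s \<in> R (a + 1) b" and tR': "t \<in> R (a + 1) b" using sr tr True s t by (auto simp: R_def)
          have "nat (b - (a + 1)) < n" using n b3 by linarith
          then obtain P where P: "good (a + 1) b s t P" using IH[OF _ _ sR' tR' st] b3 by auto
          then have hpP: "hp (R (a + 1) b) s t P" and vl: "vE P (a + 1)" and vr: "vE P b"
            by (auto simp: good_def)
          from vl obtain y y' where e: "((a + 1, y), (a + 1, y')) \<in> set (pairs P)" by (auto simp: vE_def)
          have Vy: "\<forall>x z. (x, z) \<in> R (a + 1) b \<longrightarrow> 1 \<le> z \<and> z \<le> 3" by (simp add: R_def)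
          have Vc: "\<forall>z. (a, z) \<notin> R (a + 1) b" by (simp add: R_def)
          have cd: "\<bar>a - (a + 1)\<bar> = 1" by simp
          obtain Q where Q: "hp (R (a + 1) b \<union> {(a, 1), (a, 2), (a, 3)}) s t Q"
            "set (pairs P) - {((a + 1, y), (a + 1, y'))} \<subseteq> set (pairs Q)" "ed Q (a, 1) (a, 2)"
            using ins_col[OF hpP e Vy Vc cd] by blast
          have RR: "R (a + 1) b \<union> {(a, 1), (a, 2), (a, 3)} = R a b" using b3 by (auto simp: R_def dest!: three)
          have "vE Q a" using Q(3) unfolding ed_def vE_def by blast
          moreover have "vE Q b"
          proof -
            from vr obtain z z' where "((b, z), (b, z')) \<in> set (pairs P)" by (auto simp: vE_def)
            moreover have "((b, z), (b, z')) \<noteq> ((a + 1, y), (a + 1, y'))" using b3 by simp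
            ultimately show ?thesis using Q(2) unfolding vE_def by blast
          qed
          ultimately show ?thesis using Q(1) RR unfolding good_def by auto
        next
          case c1: False
          show ?thesis
          proof (cases "sx \<noteq> b \<and> tx \<noteq> b")
            case True
            have sR': "s \<in> R a (b - 1)" and tR': "t \<in> R a (b - 1)" using sr tr True s t by (auto simp: R_def)
            have "nat (b - 1 - a) < n" using n b3 by linarith
            then obtain P where P: "good a (b - 1) s t P" using IH[OF _ _ sR' tR' st] b3 by auto
            then have hpP: "hp (R a (b - 1)) s t P" and vl: "vE P a" and vr: "vE P (b - 1)"
              by (auto simp: good_def)
            from vr obtain y y' where e: "((b - 1, y), (b - 1, y')) \<in> set (pairs P)" by (auto simp: vE_def)
            have Vy: "\<forall>x z. (x, z) \<in> R a (b - 1) \<longrightarrow> 1 \<le> z \<and> z \<le> 3" by (simp add: R_def)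
            have Vc: "\<forall>z. (b, z) \<notin> R a (b - 1)" by (simp add: R_def)
            have cd: "\<bar>b - (b - 1)\<bar> = 1" by simp
            obtain Q where Q: "hp (R a (b - 1) \<union> {(b, 1), (b, 2), (b, 3)}) s t Q"
              "set (pairs P) - {((b - 1, y), (b - 1, y'))} \<subseteq> set (pairs Q)" "ed Q (b, 1) (b, 2)"
              using ins_col[OF hpP e Vy Vc cd] by blast
            have RR: "R a (b - 1) \<union> {(b, 1), (b, 2), (b, 3)} = R a b" using b3 by (auto simp: R_def dest!: three)
            have "vE Q b" using Q(3) unfolding ed_def vE_def by blast
            moreover have "vE Q a"
            proof -
              from vl obtain z z' where "((a, z), (a, z')) \<in> set (pairs P)" by (auto simp: vE_def)
              moreover have "((a, z), (a, z')) \<noteq> ((b - 1, y), (b - 1, y'))" using b3 by simp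
              ultimately show ?thesis using Q(2) unfolding vE_def by blast
            qed
            ultimately show ?thesis using Q(1) RR unfolding good_def by auto
          next
            case c2: False
            have dj: "R a (a + 1) \<inter> R (a + 2) b = {}" by (auto simp: R_def)
            have RU: "R a (a + 1) \<union> R (a + 2) b = R a b" using b3 by (auto simp: R_def)
            have n1: "nat (a + 1 - a) < n" using n b3 by linarith
            have n2: "nat (b - (a + 2)) < n" using n b3 by linarith
            have u: "(a + 1, 1) \<in> R a (a + 1)" by (simp add: R_def)
            have v: "(a + 2, 1) \<in> R (a + 2) b" using b3 by (simp add: R_def)
            from c1 c2 have "(sx = a \<and> tx = b) \<or> (tx = a \<and> sx = b)" using b3 by auto
            then show ?thesis
            proof
              assume xs: "sx = a \<and> tx = b"
              have sR': "s \<in> R a (a + 1)" using s sr xs by (simp add: R_def)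
              have tR': "t \<in> R (a + 2) b" using t tr xs b3 by (simp add: R_def)
              obtain P1 where P1: "good a (a + 1) s (a + 1, 1) P1"
                using IH[OF n1 _ sR' u] s xs by auto
              obtain P2 where P2: "good (a + 2) b (a + 2, 1) t P2"
                using IH[OF n2 _ v tR'] t xs b3 by auto
              have ad: "sg_adj (a + 1, 1) (a + 2, 1)" by (simp add: sg_adj_def)
              have C: "hp (R a (a + 1) \<union> R (a + 2) b) s t (P1 @ P2) \<and>
                  set (pairs P1) \<union> set (pairs P2) \<subseteq> set (pairs (P1 @ P2))"
                using hp_concat[OF _ _ dj ad] P1 P2 unfolding good_def by blast
              have "vE (P1 @ P2) a" using C P1 unfolding good_def vE_def by blast
              moreover have "vE (P1 @ P2) b" using C P2 unfolding good_def vE_def by blast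
              ultimately show ?thesis using C RU unfolding good_def by auto
            next
              assume xs: "tx = a \<and> sx = b"
              have tR': "t \<in> R a (a + 1)" using t tr xs by (simp add: R_def)
              have sR': "s \<in> R (a + 2) b" using s sr xs b3 by (simp add: R_def)
              obtain P1 where P1: "good a (a + 1) (a + 1, 1) t P1"
                using IH[OF n1 _ u tR'] t xs by auto
              obtain P2 where P2: "good (a + 2) b s (a + 2, 1) P2"
                using IH[OF n2 _ sR' v] s xs b3 by auto
              have ad: "sg_adj (a + 2, 1) (a + 1, 1)" by (simp add: sg_adj_def)
              have dj': "R (a + 2) b \<inter> R a (a + 1) = {}" using dj by blast
              have C: "hp (R (a + 2) b \<union> R a (a + 1)) s t (P2 @ P1) \<and>
                  set (pairs P2) \<union> set (pairs P1) \<subseteq> set (pairs (P2 @ P1))"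
                using hp_concat[OF _ _ dj' ad] P1 P2 unfolding good_def by blast
              have "vE (P2 @ P1) a" using C P1 unfolding good_def vE_def by blast
              moreover have "vE (P2 @ P1) b" using C P2 unfolding good_def vE_def by blast
              moreover have "R (a + 2) b \<union> R a (a + 1) = R a b" using RU by blast
              ultimately show ?thesis using C unfolding good_def by auto
            qed
          qed
        qed
      qed
    qed
  qed
qed

lemma R33: "R 1 3 = {(1, 1), (1, 2), (1, 3), (2, 1), (2, 2), (2, 3), (3, 1), (3, 2), (3, 3)}"
  using R3[of 1] by simp

lemma spec1: "\<exists>P. ham_path (rect 3 3) (1, 2) (2, 2) P \<and> path_has_edge P (3, 1) (3, 2)
   \<and> path_has_edge P (3, 2) (3, 3)"
  apply (rule exI[of _ "[(1, 2), (1, 1), (2, 1), (3, 1), (3, 2), (3, 3), (2, 3), (1, 3), (2, 2)]"])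
  unfolding ham_path_hp path_has_edge_pairs hp_def
  by (simp add: rect_def R_def[symmetric] R33 sg_adj_def insert_commute)

lemma spec2: "\<exists>P. ham_path (rect 3 3) (2, 2) (1, 2) P \<and> path_has_edge P (3, 1) (3, 2)
   \<and> path_has_edge P (3, 2) (3, 3)"
  apply (rule exI[of _ "[(2, 2), (1, 1), (2, 1), (3, 1), (3, 2), (3, 3), (2, 3), (1, 3), (1, 2)]"])
  unfolding ham_path_hp path_has_edge_pairs hp_def
  by (simp add: rect_def R_def[symmetric] R33 sg_adj_def insert_commute)

theorem lemma6:
  fixes m :: int and s t :: vertex
  assumes "m \<ge> 3"
    and "s \<in> rect m 3" and "t \<in> rect m 3" and "s \<noteq> t"
    and "{s, t} \<inter> {(m, 1), (m, 2), (m, 3)} = {}"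
  shows "\<exists>P. ham_path (rect m 3) s t P \<and> path_has_edge P (m, 1) (m, 2)
              \<and> path_has_edge P (m, 2) (m, 3)"
proof -
  obtain sx sy where s: "s = (sx, sy)" by fastforce
  obtain tx ty where t: "t = (tx, ty)" by fastforce
  have sr0: "1 \<le> sx" "sx \<le> m" "1 \<le> sy" "sy \<le> 3" using assms(2) s by (auto simp: rect_def)
  have tr0: "1 \<le> tx" "tx \<le> m" "1 \<le> ty" "ty \<le> 3" using assms(3) t by (auto simp: rect_def)
  have sm: "sx \<noteq> m"
  proof
    assume "sx = m"
    then show False using assms(5) s three[OF sr0(3,4)] by auto
  qed
  have tm: "tx \<noteq> m"
  proof
    assume "tx = m"
    then show False using assms(5) t three[OF tr0(3,4)] by auto
  qed
  show ?thesis
  proof (cases "m = 3 \<and> sy = 2 \<and> ty = 2 \<and> sx \<noteq> tx")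
    case True
    then have "(sx = 1 \<and> tx = 2) \<or> (sx = 2 \<and> tx = 1)" using sr0 tr0 sm tm by auto
    then show ?thesis using True spec1 spec2 s t by auto
  next
    case False
    have sR: "s \<in> R 1 (m - 1)" using sr0 sm s by (auto simp: R_def)
    have tR: "t \<in> R 1 (m - 1)" using tr0 tm t by (auto simp: R_def)
    have nb: "\<not> (m - 1 = 1 + 1 \<and> snd s = 2 \<and> snd t = 2 \<and> fst s \<noteq> fst t)" using False s t by auto
    have lt: "(1::int) < m - 1" using assms(1) by simp
    obtain P where P: "good 1 (m - 1) s t P"
      using main[rule_format, OF refl lt sR tR assms(4) nb] by blast
    then have hpP: "hp (R 1 (m - 1)) s t P" and vr: "vE P (m - 1)" by (auto simp: good_def)
    from vr obtain y y' where e: "((m - 1, y), (m - 1, y')) \<in> set (pairs P)" by (auto simp: vE_def)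
    have Vy: "\<forall>x z. (x, z) \<in> R 1 (m - 1) \<longrightarrow> 1 \<le> z \<and> z \<le> 3" by (simp add: R_def)
    have Vc: "\<forall>z. (m, z) \<notin> R 1 (m - 1)" by (simp add: R_def)
    have cd: "\<bar>m - (m - 1)\<bar> = 1" by simp
    obtain Q where Q: "hp (R 1 (m - 1) \<union> {(m, 1), (m, 2), (m, 3)}) s t Q"
      "ed Q (m, 1) (m, 2)" "ed Q (m, 2) (m, 3)"
      using ins_col[OF hpP e Vy Vc cd] by blast
    have RR: "R 1 (m - 1) \<union> {(m, 1), (m, 2), (m, 3)} = rect m 3"
      using assms(1) by (auto simp: R_def rect_def dest!: three)
    show ?thesis using Q RR unfolding ham_path_hp path_has_edge_pairs ed_def by auto
  qed
qed

end
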